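(* Let $f(x)=\dfrac{1}{x^2-1}$, viewed as a map on $\mathbb{C}\setminus\{-1,1\}$, and consider the difference equation $x_{n+1}=f(x_n)$ over $\mathbb{C}$. Define, for $x\in\mathbb{C}\setminus\{0\}$, $$h_+(x)=\sqrt{\tfrac1x+1},\qquad h_-(x)=-\sqrt{\tfrac1x+1},$$ where $\sqrt{\cdot}$ denotes the principal branch of the complex square root. For $n\geq1$ and letters $a_1,\ldots,a_n\in\{h_+,h_-\}$, write $a_1\ldots a_n$ for the number $a_1\circ a_2\circ\cdots\circ a_n(1)$. Then: (i) the unique point $x\in\mathbb{C}$ with $f(x)=-1$ is $x=0$, and $0$ has no preimage under $f$; (ii) the points $x$ with $f^m(x)=1$ for some $m\geq1$ (all intermediate iterates being defined) are exactly the numbers $a_1\ldots a_n$ with $n\geq1$ and $a_i\in\{h_+,h_-\}$; (iii) every such word $a_1\ldots a_n$ is well defined in $\mathbb{C}$, that is, all the intermediate compositions are nonzero, and in particular $a_1\ldots a_n\neq0$; (iv) the representation is unique: if $a_1\ldots a_n=b_1\ldots b_m$ with all $a_i,b_j\in\{h_+,h_-\}$, then $n=m$ and $a_i=b_i$ for $i=1,\ldots,n$. Consequently the forbidden set of the equation over $\mathbb{C}$ is $$\mathcal F=\{-1,0,1\}\cup\{a_1\ldots a_n:\ n\in\mathbb{N},\ n\geq1,\ a_i\in\{h_+,h_-\}\}.$$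
   Context: For the difference equation $x_{n+1}=f(x_n)$ with $f$ defined on $A=\mathbb{C}\setminus\{-1,1\}$ (the poles of $f$ being $\pm1$), the forbidden set $\mathcal F$ is the set of initial conditions $x_0\in\mathbb{C}$ for which some iterate $x_n$ ($n\geq0$) of the recursion lands on a pole $\pm1$, so that $x_{n+1}$ is not defined; it includes the poles themselves. The principal square root of $w\neq0$ is the square root with argument in $(-\pi/2,\pi/2]$, and $\sqrt0=0$. *)

theory Defs
  imports Complex_Main
begin

definition fmap :: "complex \<Rightarrow> complex" where
  "fmap x = 1 / (x\<^sup>2 - 1)"

definition poles :: "complex set" where
  "poles = {-1, 1}"

definition forbidden_set :: "complex set" where
  "forbidden_set = {x. \<exists>n. (fmap ^^ n) x \<in> poles \<and> (\<forall>k<n. (fmap ^^ k) x \<notin> poles)}"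

text \<open>Letters: True encodes h_+, False encodes h_-. csqrt is the principal square root.\<close>
definition hmap :: "bool \<Rightarrow> complex \<Rightarrow> complex" where
  "hmap b x = (if b then 1 else -1) * csqrt (1 / x + 1)"

definition word_val :: "bool list \<Rightarrow> complex" where
  "word_val ws = foldr hmap ws 1"

text \<open>A word is well defined if every letter is applied to a nonzero argument,
  i.e. all intermediate compositions a_{k+1} \<circ> ... \<circ> a_n (1) are nonzero.\<close>
definition word_wd :: "bool list \<Rightarrow> bool" where
  "word_wd ws = (\<forall>k<length ws. word_val (drop (Suc k) ws) \<noteq> 0)"

end

theory Submission
  imports Defs
begin

lemma hmap_sq: "(hmap b y)^2 = 1/y + 1"
  by (simp add: hmap_def power_mult_distrib)

lemma fmap_hmap: "fmap (hmap b y) = y"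
  by (simp add: fmap_def hmap_sq)

lemma word_val_Cons: "word_val (b#ws) = hmap b (word_val ws)"
  by (simp add: word_val_def)

lemma hmap_zero_iff: "hmap b y = 0 \<longleftrightarrow> y = -1"
proof -
  have "hmap b y = 0 \<longleftrightarrow> (hmap b y)^2 = 0" by simp
  also have "\<dots> \<longleftrightarrow> 1/y + 1 = 0" by (simp add: hmap_sq)
  also have "\<dots> \<longleftrightarrow> y = -1"
    by (cases "y = 0") (auto simp: field_simps add_eq_0_iff)
  finally show ?thesis .
qed

lemma hmap_m1: "hmap b y = -1 \<Longrightarrow> y = 0"
proof -
  assume "hmap b y = -1"
  then have "(hmap b y)^2 = 1" by simp
  then have "1/y = 0" by (simp add: hmap_sq)
  then show "y = 0" by simp
qed

lemma word_nz: "word_val ws \<noteq> 0 \<and> word_val ws \<noteq> -1"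
proof (induction ws)
  case Nil then show ?case by (simp add: word_val_def)
next
  case (Cons b ws)
  then show ?case using hmap_zero_iff hmap_m1 by (metis word_val_Cons)
qed

lemma word_ne1: "ws \<noteq> [] \<Longrightarrow> word_val ws \<noteq> 1"
proof
  assume "ws \<noteq> []" "word_val ws = 1"
  then obtain b vs where ws: "ws = b#vs" by (cases ws) auto
  have "fmap (word_val ws) = word_val vs" by (simp add: ws word_val_Cons fmap_hmap)
  moreover have "fmap 1 = 0" by (simp add: fmap_def)
  ultimately show False using \<open>word_val ws = 1\<close> word_nz by metis
qed

lemma word_notpole: "ws \<noteq> [] \<Longrightarrow> word_val ws \<notin> poles"
  using word_ne1 word_nz by (auto simp: poles_def)

lemma iter_word: "k \<le> length ws \<Longrightarrow> (fmap ^^ k) (word_val ws) = word_val (drop k ws)"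
proof (induction k arbitrary: ws)
  case 0 then show ?case by simp
next
  case (Suc k)
  then obtain b vs where ws: "ws = b#vs" by (cases ws) auto
  have "(fmap ^^ Suc k) (word_val ws) = (fmap ^^ k) (fmap (word_val ws))"
    by (simp add: funpow_swap1)
  also have "\<dots> = (fmap ^^ k) (word_val vs)" by (simp add: ws word_val_Cons fmap_hmap)
  also have "\<dots> = word_val (drop k vs)" using Suc ws by simp
  finally show ?case by (simp add: ws)
qed

lemma sq_cases: "z^2 = w \<Longrightarrow> \<exists>b. z = (if b then 1 else -1) * csqrt w"
proof -
  assume "z^2 = w"
  then have "z^2 = (csqrt w)^2" by simp
  then have "z = csqrt w \<or> z = - csqrt w" using power2_eq_iff by blast
  then show ?thesis by (metis mult_1 mult_minus1)
qed

lemma fmap_inv: "x \<notin> poles \<Longrightarrow> fmap x = y \<Longrightarrow> \<exists>b. x = hmap b y"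
proof -
  assume xp: "x \<notin> poles" and fy: "fmap x = y"
  have "x^2 - 1 \<noteq> 0"
  proof
    assume "x^2 - 1 = 0"
    then have "x^2 = 1" by simp
    then have "x = 1 \<or> x = -1" using power2_eq_1_iff by blast
    then show False using xp by (auto simp: poles_def)
  qed
  have "y = 1/(x^2 - 1)" using fy by (simp add: fmap_def)
  then have "1/y = x^2 - 1" by simp
  then have "x^2 = 1/y + 1" by simp
  then show ?thesis unfolding hmap_def by (rule sq_cases)
qed

lemma back_word: "m \<ge> 1 \<Longrightarrow> (fmap ^^ m) x = 1 \<Longrightarrow> (\<forall>k<m. (fmap ^^ k) x \<notin> poles)
   \<Longrightarrow> \<exists>ws. length ws = m \<and> x = word_val ws"
proof (induction m arbitrary: x rule: nat_induct_at_least)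
  case base
  then have "fmap x = 1" "x \<notin> poles" by auto
  then obtain b where "x = hmap b 1" using fmap_inv by blast
  then show ?case by (intro exI[of _ "[b]"]) (simp add: word_val_def)
next
  case (Suc m)
  have "(fmap ^^ m) (fmap x) = 1" using Suc.prems(1) by (simp add: funpow_swap1)
  moreover have "\<forall>k<m. (fmap ^^ k) (fmap x) \<notin> poles"
  proof (intro allI impI)
    fix k assume "k < m"
    then have "(fmap ^^ Suc k) x \<notin> poles" using Suc.prems(2) by (meson Suc_mono)
    then show "(fmap ^^ k) (fmap x) \<notin> poles" by (simp add: funpow_swap1)
  qed
  ultimately obtain ws where ws: "length ws = m" "fmap x = word_val ws" using Suc.IH by blast
  have "x \<notin> poles" using Suc.prems(2) by (metis funpow_0 zero_less_Suc)
  then obtain b where "x = hmap b (word_val ws)" using fmap_inv ws(2) by blast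
  then show ?case using ws(1) by (intro exI[of _ "b#ws"]) (simp add: word_val_Cons)
qed

lemma inj_word: "word_val ws = word_val vs \<Longrightarrow> ws = vs"
proof (induction ws arbitrary: vs)
  case Nil
  then show ?case using word_ne1 by (metis word_val_def foldr_Nil id_apply)
next
  case (Cons a ws)
  note pr = Cons.prems and IH = Cons.IH
  show ?case
  proof (cases vs)
    case Nil then show ?thesis using Cons.prems word_ne1[of "a#ws"] by (simp add: word_val_def)
  next
    case (Cons b vs')
    note Cons2 = this
    have "word_val ws = word_val vs'"
      using pr Cons2 fmap_hmap word_val_Cons by metis
    then have e: "ws = vs'" using IH by blast
    have h: "hmap a (word_val ws) = hmap b (word_val ws)"
      using pr Cons2 e by (simp add: word_val_Cons)
    have "a = b"
    proof (rule ccontr)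
      assume "a \<noteq> b"
      then have "hmap a (word_val ws) = - hmap a (word_val ws)" using h
        by (cases a; cases b) (auto simp: hmap_def)
      then have "hmap a (word_val ws) = 0" by simp
      then show False using hmap_zero_iff word_nz by blast
    qed
    then show ?thesis using e Cons2 by simp
  qed
qed

theorem mainTheorem1:
  shows "{x. x \<notin> poles \<and> fmap x = -1} = {0}
    \<and> \<not> (\<exists>x. x \<notin> poles \<and> fmap x = 0)
    \<and> {x. \<exists>m\<ge>1. (fmap ^^ m) x = 1 \<and> (\<forall>k<m. (fmap ^^ k) x \<notin> poles)}
        = {word_val ws | ws. ws \<noteq> []}
    \<and> (\<forall>ws. ws \<noteq> [] \<longrightarrow> word_wd ws \<and> word_val ws \<noteq> 0)
    \<and> (\<forall>ws vs. ws \<noteq> [] \<longrightarrow> vs \<noteq> [] \<longrightarrow> word_val ws = word_val vs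
          \<longrightarrow> length ws = length vs \<and> (\<forall>i<length ws. ws ! i = vs ! i))
    \<and> forbidden_set = {-1, 0, 1} \<union> {word_val ws | ws. ws \<noteq> []}"
proof -
  have p0: "(0::complex) \<notin> poles" by (simp add: poles_def)
  have f0: "fmap 0 = -1" by (simp add: fmap_def)
  have A: "{x. x \<notin> poles \<and> fmap x = -1} = {0}"
  proof
    show "{x. x \<notin> poles \<and> fmap x = -1} \<subseteq> {0}"
    proof
      fix x assume "x \<in> {x. x \<notin> poles \<and> fmap x = -1}"
      then obtain b where "x = hmap b (-1)" using fmap_inv by blast
      then show "x \<in> {0}" using hmap_zero_iff by simp
    qed
  qed (use p0 f0 in auto)
  have B: "\<not> (\<exists>x. x \<notin> poles \<and> fmap x = 0)"
  proof
    assume "\<exists>x. x \<notin> poles \<and> fmap x = 0"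
    then obtain x b where "x \<notin> poles" "x = hmap b 0" using fmap_inv by blast
    moreover have "hmap b 0 \<in> poles" by (cases b) (auto simp: hmap_def poles_def)
    ultimately show False by simp
  qed
  have C: "{x. \<exists>m\<ge>1. (fmap ^^ m) x = 1 \<and> (\<forall>k<m. (fmap ^^ k) x \<notin> poles)}
        = {word_val ws | ws. ws \<noteq> []}"
  proof
    show "{x. \<exists>m\<ge>1. (fmap ^^ m) x = 1 \<and> (\<forall>k<m. (fmap ^^ k) x \<notin> poles)}
        \<subseteq> {word_val ws | ws. ws \<noteq> []}"
    proof
      fix x assume "x \<in> {x. \<exists>m\<ge>1. (fmap ^^ m) x = 1 \<and> (\<forall>k<m. (fmap ^^ k) x \<notin> poles)}"
      then obtain m where "m \<ge> 1" "(fmap ^^ m) x = 1" "\<forall>k<m. (fmap ^^ k) x \<notin> poles" by blast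
      then obtain ws where "length ws = m" "x = word_val ws" using back_word by blast
      then show "x \<in> {word_val ws | ws. ws \<noteq> []}" using \<open>m \<ge> 1\<close> by auto
    qed
  next
    show "{word_val ws | ws. ws \<noteq> []} \<subseteq>
      {x. \<exists>m\<ge>1. (fmap ^^ m) x = 1 \<and> (\<forall>k<m. (fmap ^^ k) x \<notin> poles)}"
    proof
      fix x assume "x \<in> {word_val ws | ws. ws \<noteq> []}"
      then obtain ws where ws: "ws \<noteq> []" "x = word_val ws" by blast
      have "(fmap ^^ length ws) x = 1" using ws iter_word[of "length ws" ws] by (simp add: word_val_def)
      moreover have "\<forall>k<length ws. (fmap ^^ k) x \<notin> poles"
        using ws iter_word word_notpole by simp
      ultimately show "x \<in> {x. \<exists>m\<ge>1. (fmap ^^ m) x = 1 \<and> (\<forall>k<m. (fmap ^^ k) x \<notin> poles)}"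
        using ws(1) by (auto simp: Suc_le_eq)
    qed
  qed
  have D: "\<forall>ws. ws \<noteq> [] \<longrightarrow> word_wd ws \<and> word_val ws \<noteq> 0"
    using word_nz by (simp add: word_wd_def)
  have E: "\<forall>ws vs. ws \<noteq> [] \<longrightarrow> vs \<noteq> [] \<longrightarrow> word_val ws = word_val vs
          \<longrightarrow> length ws = length vs \<and> (\<forall>i<length ws. ws ! i = vs ! i)"
    using inj_word by blast
  have F: "forbidden_set = {-1, 0, 1} \<union> {word_val ws | ws. ws \<noteq> []}"
  proof
    show "forbidden_set \<subseteq> {-1, 0, 1} \<union> {word_val ws | ws. ws \<noteq> []}"
    proof
      fix x assume "x \<in> forbidden_set"
      then obtain n where n: "(fmap ^^ n) x \<in> poles" "\<forall>k<n. (fmap ^^ k) x \<notin> poles"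
        by (auto simp: forbidden_set_def)
      show "x \<in> {-1, 0, 1} \<union> {word_val ws | ws. ws \<noteq> []}"
      proof (cases "n = 0")
        case True then show ?thesis using n by (auto simp: poles_def)
      next
        case False
        then obtain m where m: "n = Suc m" by (cases n) auto
        have y: "(fmap ^^ m) x \<notin> poles" using n m by simp
        have fy: "fmap ((fmap ^^ m) x) \<in> poles" using n m by simp
        show ?thesis
        proof (cases "(fmap ^^ n) x = 1")
          case True
          then have "x \<in> {x. \<exists>m\<ge>1. (fmap ^^ m) x = 1 \<and> (\<forall>k<m. (fmap ^^ k) x \<notin> poles)}"
            using n m by (auto intro!: exI[of _ n])
          then show ?thesis using C by blast
        next
          case False
          then have "fmap ((fmap ^^ m) x) = -1" using fy m by (auto simp: poles_def)
          then have y0: "(fmap ^^ m) x = 0" using A y by blast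
          show ?thesis
          proof (cases m)
            case 0 then show ?thesis using y0 by simp
          next
            case (Suc j)
            have "(fmap ^^ j) x \<notin> poles" using n m Suc by simp
            moreover have "fmap ((fmap ^^ j) x) = 0" using y0 Suc by simp
            ultimately show ?thesis using B by blast
          qed
        qed
      qed
    qed
  next
    show "{-1, 0, 1} \<union> {word_val ws | ws. ws \<noteq> []} \<subseteq> forbidden_set"
    proof
      fix x assume x: "x \<in> {-1, 0, 1} \<union> {word_val ws | ws. ws \<noteq> []}"
      show "x \<in> forbidden_set"
      proof (cases "x = 0")
        case True
        then show ?thesis unfolding forbidden_set_def
          using p0 f0 by (intro CollectI exI[of _ 1]) (auto simp: poles_def)
      next
        case False
        show ?thesis
        proof (cases "x \<in> poles")
          case True then show ?thesis unfolding forbidden_set_def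
            by (intro CollectI exI[of _ 0]) auto
        next
          case np: False
          then have "x \<in> {word_val ws | ws. ws \<noteq> []}" using x False by (auto simp: poles_def)
          then have "x \<in> {x. \<exists>m\<ge>1. (fmap ^^ m) x = 1 \<and> (\<forall>k<m. (fmap ^^ k) x \<notin> poles)}"
            using C by blast
          then obtain m where "(fmap ^^ m) x = 1" "\<forall>k<m. (fmap ^^ k) x \<notin> poles" by blast
          then show ?thesis unfolding forbidden_set_def
            by (intro CollectI exI[of _ m]) (auto simp: poles_def)
        qed
      qed
    qed
  qed
  show ?thesis using A B C D E F by blast
qed

end
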